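(* Let $k\ge 1$. There is no deterministic exploration algorithm that, knowing $k$, having unlimited memory, but having no information on the number of sites $n$ nor on (any upper bound on) the system period $p$, solves PVG-Exploration of every feasible homogeneous PV graph with distinct site identifiers and $k$ carriers (over all numbers of sites $n\ge k$ and all periods).
   Context: A PV (periodically varying) system consists of a finite set $S$ of $n$ sites and a set $C$ of $k\le n$ carriers. Each carrier $c$ has a distinct identifier and a route $\pi(c)=\langle x_0,\dots,x_{p(c)-1}\rangle$, a finite sequence of sites (repetitions allowed) of length $p(c)\ge 1$ called its period; for any integer $j$, $\pi(c)[j]$ denotes $x_{j \bmod p(c)}$. At each time $t\in\mathbb{N}$ carrier $c$ is at site $\pi(c)[t]$ and moves to $\pi(c)[t+1]$. The PV graph $\vec G_R$ is the directed edge-labelled multigraph on $S$ with edges $(x_i,x_{i+1},i)$, $0\le i<p(c)$ (indices mod $p(c)$), for every carrier $c$. Let $p=\max_{c}p(c)$. The system is homogeneous if all carriers have the same period. In a system with ids, sites have distinct identifiers visible to the agent. An exploring agent is injected at time $0$ at a site of $\mathrm{start}(\vec G_R)=\{\pi(c)[0]:c\in C\}$. If at time $t$ the agent is at site $x$, it must either choose a carrier $c$ with $\pi(c)[t]=x$ and ride with it to $\pi(c)[t+1]$ (one move), or halt and exit; it cannot wait at a site. At each time the agent observes the identifiers of the carriers present at its current site and the identifier of the site. An exploration algorithm is a deterministic rule mapping the agent's a priori knowledge and history of observations to its next action; its execution from injection site $x$ determines a walk $\xi(x)$. A walk is a concrete cover if it visits every site. An algorithm solves PVG-Exploration of $\vec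 G_R$ if for every $x\in\mathrm{start}(\vec G_R)$, $\xi(x)$ is finite and a concrete cover. $\vec G_R$ is feasible if from the starting point of every carrier there exists a walk realizable by the agent (riding carriers and switching between carriers at the same site at the same time) that is a concrete cover. *)

theory Defs
  imports Main
begin

text \<open>A PV system is given by a finite set of sites S, a finite set of carriers C,
and routes R :: carrier \<Rightarrow> site list (route of carrier c, period = length).\<close>

type_synonym site = nat
type_synonym carrier = nat
type_synonym routes = "carrier \<Rightarrow> site list"

definition pos :: "routes \<Rightarrow> carrier \<Rightarrow> nat \<Rightarrow> site" where
  "pos R c t = R c ! (t mod length (R c))"

definition pv_system :: "site set \<Rightarrow> carrier set \<Rightarrow> routes \<Rightarrow> nat \<Rightarrow> bool" where
  "pv_system S C R k \<longleftrightarrow> finite S \<and> finite C \<and> card C = k \<and> k \<le> card S \<and>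
     (\<forall>c\<in>C. R c \<noteq> [] \<and> set (R c) \<subseteq> S)"

definition homogeneous :: "carrier set \<Rightarrow> routes \<Rightarrow> bool" where
  "homogeneous C R \<longleftrightarrow> (\<forall>c\<in>C. \<forall>d\<in>C. length (R c) = length (R d))"

definition is_walk :: "carrier set \<Rightarrow> routes \<Rightarrow> site list \<Rightarrow> bool" where
  "is_walk C R xs \<longleftrightarrow> xs \<noteq> [] \<and>
     (\<forall>i. Suc i < length xs \<longrightarrow>
        (\<exists>c\<in>C. pos R c i = xs ! i \<and> pos R c (Suc i) = xs ! Suc i))"

definition feasible :: "site set \<Rightarrow> carrier set \<Rightarrow> routes \<Rightarrow> bool" where
  "feasible S C R \<longleftrightarrow>
     (\<forall>c\<in>C. \<exists>xs. is_walk C R xs \<and> hd xs = pos R c 0 \<and> S \<subseteq> set xs)"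

text \<open>An algorithm (with arbitrary
memory, knowing k implicitly) maps the full history of observations to an action.\<close>
datatype action = Ride carrier | Halt

type_synonym observation = "site \<times> carrier set"
type_synonym algorithm = "observation list \<Rightarrow> action"

definition obs :: "carrier set \<Rightarrow> routes \<Rightarrow> site \<Rightarrow> nat \<Rightarrow> observation" where
  "obs C R x t = (x, {c \<in> C. pos R c t = x})"

definition obs_hist :: "carrier set \<Rightarrow> routes \<Rightarrow> site list \<Rightarrow> observation list" where
  "obs_hist C R xs = map (\<lambda>i. obs C R (xs ! i) i) [0..<length xs]"

text \<open>run alg C R x0 t = Some [x_0,...,x_t] if the agent, injected at x0 at time 0,
is still travelling at time t (all previous actions were legal rides);
None if it halted before time t or attempted an illegal move.\<close>
primrec run :: "algorithm \<Rightarrow> carrier set \<Rightarrow> routes \<Rightarrow> site \<Rightarrow> nat \<Rightarrow> site list option" where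
  "run alg C R x0 0 = Some [x0]"
| "run alg C R x0 (Suc t) =
     (case run alg C R x0 t of
        None \<Rightarrow> None
      | Some xs \<Rightarrow>
          (case alg (obs_hist C R xs) of
             Halt \<Rightarrow> None
           | Ride c \<Rightarrow> if c \<in> C \<and> pos R c t = last xs
                       then Some (xs @ [pos R c (Suc t)]) else None))"

definition explores :: "algorithm \<Rightarrow> site set \<Rightarrow> carrier set \<Rightarrow> routes \<Rightarrow> site \<Rightarrow> bool" where
  "explores alg S C R x0 \<longleftrightarrow>
     (\<exists>t xs. run alg C R x0 t = Some xs \<and> alg (obs_hist C R xs) = Halt \<and> S \<subseteq> set xs)"

definition solves :: "algorithm \<Rightarrow> site set \<Rightarrow> carrier set \<Rightarrow> routes \<Rightarrow> bool" where
  "solves alg S C R \<longleftrightarrow> (\<forall>c\<in>C. explores alg S C R (pos R c 0))"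

end

theory Submission
  imports Defs
begin

lemma run_len: "run alg C R x0 t = Some xs \<Longrightarrow> length xs = Suc t"
proof (induction t arbitrary: xs)
  case 0 then show ?case by auto
next
  case (Suc t)
  then show ?case
    by (auto split: option.splits action.splits if_splits)
qed

lemma run_set: "run alg C R x0 t = Some xs \<Longrightarrow> set xs \<subseteq> insert x0 {pos R c s | c s. True}"
proof (induction t arbitrary: xs)
  case 0 then show ?case by auto
next
  case (Suc t)
  then show ?case
    by (fastforce split: option.splits action.splits if_splits)
qed

lemma run_none: "run alg C R x0 t = None \<Longrightarrow> run alg C R x0 (t + d) = None"
  by (induction d) auto

lemma run_halt: "run alg C R x0 t = Some xs \<Longrightarrow> alg (obs_hist C R xs) = Halt
   \<Longrightarrow> run alg C R x0 (Suc t) = None"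
  by simp

lemma obs_hist_eq:
  assumes "\<And>c s. s < length xs \<Longrightarrow> pos R1 c s = pos R2 c s"
  shows "obs_hist C R1 xs = obs_hist C R2 xs"
  using assms by (auto simp: obs_hist_def obs_def)

lemma run_agree:
  assumes "\<And>c s. s \<le> T \<Longrightarrow> pos R1 c s = pos R2 c s"
  shows "t \<le> T \<Longrightarrow> run alg C R1 x0 t = run alg C R2 x0 t"
proof (induction t)
  case 0 then show ?case by simp
next
  case (Suc t)
  then have IH: "run alg C R1 x0 t = run alg C R2 x0 t" by simp
  show ?case
  proof (cases "run alg C R2 x0 t")
    case None then show ?thesis using IH by simp
  next
    case (Some xs)
    have "length xs = Suc t" using Some run_len by blast
    then have "obs_hist C R1 xs = obs_hist C R2 xs"
      using Suc.prems by (intro obs_hist_eq assms) auto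
    moreover have "\<And>c. pos R1 c t = pos R2 c t" "\<And>c. pos R1 c (Suc t) = pos R2 c (Suc t)"
      using Suc.prems assms by auto
    ultimately show ?thesis using IH Some
      by (simp split: action.splits)
  qed
qed

theorem mainTheorem2:
  fixes k :: nat
  assumes "k \<ge> 1"
  shows "\<not> (\<exists>alg :: algorithm. \<forall>S C R.
            pv_system S C R k \<and> homogeneous C R \<and> feasible S C R \<longrightarrow> solves alg S C R)"
proof
  assume "\<exists>alg :: algorithm. \<forall>S C R.
            pv_system S C R k \<and> homogeneous C R \<and> feasible S C R \<longrightarrow> solves alg S C R"
  then obtain alg :: algorithm where H: "\<And>S C R.
            pv_system S C R k \<Longrightarrow> homogeneous C R \<Longrightarrow> feasible S C R \<Longrightarrow> solves alg S C R"
    by blast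
  define C :: "nat set" where "C = {0..<k}"
  define R1 :: routes where "R1 = (\<lambda>c. [0..<k])"
  have k0: "0 < k" using assms by simp
  have p1: "\<And>c t. pos R1 c t = t mod k" by (simp add: pos_def R1_def k0)
  have "pv_system {0..<k} C R1 k" using k0 by (auto simp: pv_system_def C_def R1_def)
  moreover have "homogeneous C R1" by (simp add: homogeneous_def R1_def)
  moreover have "feasible {0..<k} C R1"
    unfolding feasible_def
  proof
    fix c assume "c \<in> C"
    show "\<exists>xs. is_walk C R1 xs \<and> hd xs = pos R1 c 0 \<and> {0..<k} \<subseteq> set xs"
      by (rule exI[of _ "[0..<k]"]) (use k0 in \<open>auto simp: is_walk_def p1 C_def hd_upt\<close>)
  qed
  ultimately have "solves alg {0..<k} C R1" by (rule H)
  then have "explores alg {0..<k} C R1 0" using k0 by (auto simp: solves_def C_def p1)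
  then obtain t xs where r1: "run alg C R1 0 t = Some xs" and h1: "alg (obs_hist C R1 xs) = Halt"
    unfolding explores_def by blast
  define L where "L = t + k + 2"
  define f where "f = (\<lambda>i::nat. if i < t + k + 1 then i mod k else k)"
  define R2 :: routes where "R2 = (\<lambda>c. map f [0..<L])"
  have p2: "\<And>c s. pos R2 c s = f (s mod L)"
  proof -
    fix c s
    have "s mod L < L" by (simp add: L_def)
    then show "pos R2 c s = f (s mod L)" by (simp add: pos_def R2_def del: upt_Suc)
  qed
  have agree: "\<And>c s. s \<le> t \<Longrightarrow> pos R1 c s = pos R2 c s"
    by (simp add: p1 p2 L_def f_def)
  have r2: "run alg C R2 0 t = Some xs" using run_agree[OF agree, of t] r1 by simp
  have lxs: "length xs = Suc t" using r1 run_len by blast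
  have h2: "alg (obs_hist C R2 xs) = Halt"
    using h1 obs_hist_eq[of xs R1 R2 C] agree lxs by simp
  have "pv_system {0..k} C R2 k" using k0
    by (auto simp: pv_system_def C_def R2_def L_def f_def)
  moreover have "homogeneous C R2" by (simp add: homogeneous_def R2_def)
  moreover have "feasible {0..k} C R2"
    unfolding feasible_def
  proof
    fix c assume "c \<in> C"
    have "\<And>j. j \<le> k \<Longrightarrow> j \<in> set (map f [0..<L])"
    proof -
      fix j assume "j \<le> k"
      show "j \<in> set (map f [0..<L])"
      proof (cases "j < k")
        case True
        then have "f j = j" by (simp add: f_def)
        moreover have "j \<in> set [0..<L]" using True by (simp add: L_def)
        ultimately show ?thesis by (metis image_eqI set_map)
      next
        case False
        then have "f (L - 1) = j" using \<open>j \<le> k\<close> by (simp add: f_def L_def)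
        moreover have "L - 1 \<in> set [0..<L]" by (simp add: L_def)
        ultimately show ?thesis by (metis image_eqI set_map)
      qed
    qed
    moreover have "is_walk C R2 (map f [0..<L])"
      unfolding is_walk_def using k0
      by (auto simp: L_def p2 C_def simp del: upt_Suc intro!: bexI[of _ 0])
    moreover have "hd (map f [0..<L]) = pos R2 c 0"
      by (simp add: p2 L_def hd_map hd_upt del: upt_Suc)
    ultimately show "\<exists>xs. is_walk C R2 xs \<and> hd xs = pos R2 c 0 \<and> {0..k} \<subseteq> set xs"
      by (intro exI[of _ "map f [0..<L]"]) auto
  qed
  ultimately have "solves alg {0..k} C R2" by (rule H)
  then have "explores alg {0..k} C R2 0"
    using k0 by (auto simp: solves_def C_def p2 f_def L_def)
  then obtain t' xs' where r2': "run alg C R2 0 t' = Some xs'"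
      and h2': "alg (obs_hist C R2 xs') = Halt" and cov: "{0..k} \<subseteq> set xs'"
    unfolding explores_def by blast
  have "t' = t"
  proof (rule ccontr)
    assume "t' \<noteq> t"
    then consider "t' < t" | "t < t'" by linarith
    then show False
    proof cases
      case 1
      have "run alg C R2 0 (Suc t' + (t - Suc t')) = None"
        using run_none run_halt[OF r2' h2'] by blast
      then show False using 1 r2 by simp
    next
      case 2
      have "run alg C R2 0 (Suc t + (t' - Suc t)) = None"
        using run_none run_halt[OF r2 h2] by blast
      then show False using 2 r2' by simp
    qed
  qed
  then have "xs' = xs" using r2 r2' by simp
  then have "k \<in> set xs" using cov by auto
  moreover have "set xs \<subseteq> insert 0 {pos R1 c s | c s. True}" using run_set[OF r1] .
  ultimately have "\<exists>s. k = s mod k" using k0 by (auto simp: p1)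
  then show False using k0 by (metis less_irrefl mod_less_divisor)
qed

end
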